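(* The time-discrete first order scheme consisting of $$\widehat\rho=\rho^n-\Delta t\nabla\cdot(\rho\mathbf u)^n,\ \widehat{\rho\mathbf u}=(\rho\mathbf u)^n-\Delta t\nabla\cdot(\rho\mathbf u\otimes\mathbf u+p\,\mathrm{Id})^n,\ \widehat{\rho E}=(\rho E)^n-\Delta t\nabla\cdot((\rho E+\Pi)^n\mathbf u^n),$$ $$\rho^{n+1}=\widehat\rho,\qquad (\rho\mathbf u)^{n+1}=\widehat{\rho\mathbf u}-\frac{1-\varepsilon^2}{\varepsilon^2}\Delta t\nabla p^{n+1},$$ and the elliptic pressure equation $$-\frac{(1-\varepsilon^2)^2}{\varepsilon^2}\Delta t^2\nabla\cdot\Big(\frac{(p-p_\infty)^{n+1}}{\widehat\rho}\nabla p^{n+1}\Big)+\frac{p^{n+1}}{\gamma-1}=-\frac{(1-\varepsilon^2)^2}{2\varepsilon^2}\frac{\Delta t^2}{\widehat\rho}\|\nabla p^{n+1}\|^2-(1-\varepsilon^2)\Delta t(p-p_\infty)^{n+1}\nabla\cdot\widehat{\mathbf u}+\frac{\widehat p}{\gamma-1}$$ (with $\widehat{\mathbf u}=\widehat{\rho\mathbf u}/\widehat\rho$, $\widehat p=(\gamma-1)(\widehat{\rho E}-\frac{\varepsilon^2}{2}\widehat\rho\|\widehat{\mathbf u}\|^2)$) is asymptotic preserving in the following sense: the leading order asymptotic expansion of the numerical solution is a consistent approximation of the incompressible Euler equations $$\rho^{(0)}_t+\nabla\cdot(\rho^{(0)}\mathbf u^{(0)})=0,\quad (\rho^{(0)}\mathbf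 u^{(0)})_t+\nabla\cdot(\rho^{(0)}\mathbf u^{(0)}\otimes\mathbf u^{(0)})+\nabla p^{(2)}=0,\quad \nabla\cdot\mathbf u^{(0)}=-\frac{1}{\gamma p^{(0)}}\frac{dp^{(0)}}{dt}.$$
   Context: Nondimensionalised Euler equations in $\mathbb R^d$ with conserved variables $(\rho,\rho\mathbf u,\rho E)$, equation of state $p=(\gamma-1)(\rho E-\frac{\varepsilon^2}{2}\rho\|\mathbf u\|^2)$, $\gamma>1$, reference Mach number $0<\varepsilon\le1$. Auxiliary pressure $\Pi=\varepsilon^2p+(1-\varepsilon^2)p_\infty$ with reference pressure $p_\infty(t)=\inf_{\mathbf x}p(\mathbf x,t)$. The asymptotic analysis expands all variables as $f=f^{(0)}+\varepsilon f^{(1)}+\varepsilon^2f^{(2)}+\mathcal O(\varepsilon^3)$; in the limit system $p^{(0)}=p^{(0)}(t)$ is spatially constant and $p^{(2)}$ is the incompressible pressure. *)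

theory Defs
  imports "HOL-Analysis.Analysis"
begin

definition pd :: "'d \<Rightarrow> (real^'d \<Rightarrow> real) \<Rightarrow> real^'d \<Rightarrow> real" where
  "pd i f x = deriv (\<lambda>t. f (x + t *\<^sub>R axis i 1)) 0"

definition grad :: "(real^'d \<Rightarrow> real) \<Rightarrow> real^'d \<Rightarrow> real^'d" where
  "grad f x = (\<chi> i. pd i f x)"

definition divg :: "(real^'d \<Rightarrow> real^'d) \<Rightarrow> real^'d \<Rightarrow> real" where
  "divg F x = (\<Sum>i\<in>UNIV. pd i (\<lambda>y. F y $ i) x)"

definition div_ruu :: "(real^'d \<Rightarrow> real) \<Rightarrow> (real^'d \<Rightarrow> real^'d) \<Rightarrow> real^'d \<Rightarrow> real^'d" where
  "div_ruu r u x = (\<chi> j. \<Sum>i\<in>UNIV. pd i (\<lambda>y. r y * (u y $ i) * (u y $ j)) x)"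

definition twice_pdiff :: "(real^'d \<Rightarrow> real) \<Rightarrow> bool" where
  "twice_pdiff f \<longleftrightarrow> (\<forall>x. f differentiable (at x)) \<and>
                      (\<forall>i x. pd i f differentiable (at x))"

definition bdd_C2 :: "(real^'d \<Rightarrow> real) \<Rightarrow> bool" where
  "bdd_C2 f \<longleftrightarrow> twice_pdiff f \<and> bounded (range f) \<and> (\<forall>i. bounded (range (pd i f))) \<and>
                 (\<forall>i j. bounded (range (pd j (pd i f))))"

definition asym_exp :: "(real \<Rightarrow> real^'d \<Rightarrow> real) \<Rightarrow> (real^'d \<Rightarrow> real) \<Rightarrow>
                        (real^'d \<Rightarrow> real) \<Rightarrow> (real^'d \<Rightarrow> real) \<Rightarrow> bool" where
  "asym_exp f f0 f1 f2 \<longleftrightarrow> bdd_C2 f0 \<and> bdd_C2 f1 \<and> bdd_C2 f2 \<and>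
     (\<exists>\<delta>>0. \<exists>C. \<forall>e. 0 < e \<and> e < \<delta> \<longrightarrow> twice_pdiff (f e) \<and>
        (\<forall>x. \<bar>f e x - (f0 x + e * f1 x + e\<^sup>2 * f2 x)\<bar> \<le> C * e ^ 3 \<and>
             (\<forall>i. \<bar>pd i (f e) x - (pd i f0 x + e * pd i f1 x + e\<^sup>2 * pd i f2 x)\<bar> \<le> C * e ^ 3) \<and>
             (\<forall>i j. \<bar>pd j (pd i (f e)) x - (pd j (pd i f0) x + e * pd j (pd i f1) x
                                     + e\<^sup>2 * pd j (pd i f2) x)\<bar> \<le> C * e ^ 3)))"

definition vasym_exp :: "(real \<Rightarrow> real^'d \<Rightarrow> real^'d) \<Rightarrow> (real^'d \<Rightarrow> real^'d) \<Rightarrow>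
                        (real^'d \<Rightarrow> real^'d) \<Rightarrow> (real^'d \<Rightarrow> real^'d) \<Rightarrow> bool" where
  "vasym_exp u u0 u1 u2 \<longleftrightarrow> (\<forall>i. asym_exp (\<lambda>e x. u e x $ i) (\<lambda>x. u0 x $ i) (\<lambda>x. u1 x $ i) (\<lambda>x. u2 x $ i))"

definition rhoE :: "real \<Rightarrow> real \<Rightarrow> (real^'d \<Rightarrow> real) \<Rightarrow> (real^'d \<Rightarrow> real^'d) \<Rightarrow>
                   (real^'d \<Rightarrow> real) \<Rightarrow> real^'d \<Rightarrow> real" where
  "rhoE eps \<gamma> r u p x = p x / (\<gamma> - 1) + eps\<^sup>2 / 2 * r x * (norm (u x))\<^sup>2"

definition pinf :: "(real^'d \<Rightarrow> real) \<Rightarrow> real" where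
  "pinf p = Inf (range p)"

definition rho_hat :: "real \<Rightarrow> (real^'d \<Rightarrow> real) \<Rightarrow> (real^'d \<Rightarrow> real^'d) \<Rightarrow> real^'d \<Rightarrow> real" where
  "rho_hat dt r u x = r x - dt * divg (\<lambda>y. r y *\<^sub>R u y) x"

definition m_hat :: "real \<Rightarrow> (real^'d \<Rightarrow> real) \<Rightarrow> (real^'d \<Rightarrow> real^'d) \<Rightarrow>
                    (real^'d \<Rightarrow> real) \<Rightarrow> real^'d \<Rightarrow> real^'d" where
  "m_hat dt r u p x = r x *\<^sub>R u x - dt *\<^sub>R (div_ruu r u x + grad p x)"

definition E_hat :: "real \<Rightarrow> real \<Rightarrow> real \<Rightarrow> (real^'d \<Rightarrow> real) \<Rightarrow> (real^'d \<Rightarrow> real^'d) \<Rightarrow>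
                    (real^'d \<Rightarrow> real) \<Rightarrow> real^'d \<Rightarrow> real" where
  "E_hat dt eps \<gamma> r u p x = rhoE eps \<gamma> r u p x
     - dt * divg (\<lambda>y. (rhoE eps \<gamma> r u p y + (eps\<^sup>2 * p y + (1 - eps\<^sup>2) * pinf p)) *\<^sub>R u y) x"

definition u_hat :: "real \<Rightarrow> (real^'d \<Rightarrow> real) \<Rightarrow> (real^'d \<Rightarrow> real^'d) \<Rightarrow>
                    (real^'d \<Rightarrow> real) \<Rightarrow> real^'d \<Rightarrow> real^'d" where
  "u_hat dt r u p x = (1 / rho_hat dt r u x) *\<^sub>R m_hat dt r u p x"

definition p_hat :: "real \<Rightarrow> real \<Rightarrow> real \<Rightarrow> (real^'d \<Rightarrow> real) \<Rightarrow> (real^'d \<Rightarrow> real^'d) \<Rightarrow>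
                    (real^'d \<Rightarrow> real) \<Rightarrow> real^'d \<Rightarrow> real" where
  "p_hat dt eps \<gamma> r u p x = (\<gamma> - 1) * (E_hat dt eps \<gamma> r u p x
       - eps\<^sup>2 / 2 * rho_hat dt r u x * (norm (u_hat dt r u p x))\<^sup>2)"

definition scheme_step :: "real \<Rightarrow> real \<Rightarrow> real \<Rightarrow>
     (real^'d \<Rightarrow> real) \<Rightarrow> (real^'d \<Rightarrow> real^'d) \<Rightarrow> (real^'d \<Rightarrow> real) \<Rightarrow>
     (real^'d \<Rightarrow> real) \<Rightarrow> (real^'d \<Rightarrow> real^'d) \<Rightarrow> (real^'d \<Rightarrow> real) \<Rightarrow> bool" where
  "scheme_step dt eps \<gamma> r u p r' u' p' \<longleftrightarrow>
     (\<forall>x. r' x = rho_hat dt r u x) \<and>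
     (\<forall>x. r' x *\<^sub>R u' x = m_hat dt r u p x - ((1 - eps\<^sup>2) / eps\<^sup>2 * dt) *\<^sub>R grad p' x) \<and>
     (\<forall>x. - ((1 - eps\<^sup>2)\<^sup>2 / eps\<^sup>2) * dt\<^sup>2 *
            divg (\<lambda>y. ((p' y - pinf p') / rho_hat dt r u y) *\<^sub>R grad p' y) x
          + p' x / (\<gamma> - 1)
        = - ((1 - eps\<^sup>2)\<^sup>2 / (2 * eps\<^sup>2)) * dt\<^sup>2 / rho_hat dt r u x * (norm (grad p' x))\<^sup>2
          - (1 - eps\<^sup>2) * dt * (p' x - pinf p') * divg (u_hat dt r u p) x
          + p_hat dt eps \<gamma> r u p x / (\<gamma> - 1))"

end

theory Submission
  imports Defs
begin

lemma line_has_deriv: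
  fixes f :: "real^'d \<Rightarrow> real"
  assumes "f differentiable (at x)"
  shows "((\<lambda>t. f (x + t *\<^sub>R axis i 1)) has_real_derivative pd i f x) (at 0)"
proof -
  have "(\<lambda>t. x + t *\<^sub>R axis i (1::real)) differentiable (at (0::real))"
    by (intro derivative_intros)
  moreover have "f differentiable (at (x + 0 *\<^sub>R axis i 1))" using assms by simp
  ultimately have "(\<lambda>t. f (x + t *\<^sub>R axis i 1)) differentiable (at 0)"
    using differentiable_compose[where g="\<lambda>t. x + t *\<^sub>R axis i (1::real)" and f=f] by auto
  then show ?thesis unfolding pd_def using DERIV_deriv_iff_real_differentiable by blast
qed

lemma pd_eqI:
  fixes f :: "real^'d \<Rightarrow> real"
  assumes "((\<lambda>t. f (x + t *\<^sub>R axis i 1)) has_real_derivative D) (at 0)"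
  shows "pd i f x = D"
  unfolding pd_def using DERIV_imp_deriv[OF assms] .

lemma pd_const[simp]: "pd i (\<lambda>y. c) x = 0"
  by (rule pd_eqI) (rule DERIV_const)

lemma pd_mult:
  fixes f g :: "real^'d \<Rightarrow> real"
  assumes "f differentiable (at x)" "g differentiable (at x)"
  shows "pd i (\<lambda>y. f y * g y) x = pd i f x * g x + f x * pd i g x"
  apply (rule pd_eqI)
  using DERIV_mult[OF line_has_deriv[OF assms(1), of i] line_has_deriv[OF assms(2), of i]] by (simp add: mult.commute)

lemma pd_add:
  fixes f g :: "real^'d \<Rightarrow> real"
  assumes "f differentiable (at x)" "g differentiable (at x)"
  shows "pd i (\<lambda>y. f y + g y) x = pd i f x + pd i g x"
  apply (rule pd_eqI)
  using DERIV_add[OF line_has_deriv[OF assms(1), of i] line_has_deriv[OF assms(2), of i]] by simp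

lemma pd_diff:
  fixes f g :: "real^'d \<Rightarrow> real"
  assumes "f differentiable (at x)" "g differentiable (at x)"
  shows "pd i (\<lambda>y. f y - g y) x = pd i f x - pd i g x"
  apply (rule pd_eqI)
  using DERIV_diff[OF line_has_deriv[OF assms(1), of i] line_has_deriv[OF assms(2), of i]] by simp

lemma pd_inverse:
  fixes f :: "real^'d \<Rightarrow> real"
  assumes "f differentiable (at x)" "f x \<noteq> 0"
  shows "pd i (\<lambda>y. inverse (f y)) x = - (pd i f x * inverse (f x ^ 2))"
  apply (rule pd_eqI)
  using DERIV_inverse_fun[OF line_has_deriv[OF assms(1), of i]] assms(2) by (simp add: power2_eq_square)

lemma pd_sum:
  fixes f :: "'a \<Rightarrow> real^'d \<Rightarrow> real"
  assumes "finite S" "\<And>a. a \<in> S \<Longrightarrow> f a differentiable (at x)"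
  shows "pd i (\<lambda>y. \<Sum>a\<in>S. f a y) x = (\<Sum>a\<in>S. pd i (f a) x)"
  apply (rule pd_eqI)
  using DERIV_sum[of S "\<lambda>t a. f a (x + t *\<^sub>R axis i 1)" "\<lambda>a. pd i (f a) x" "at 0"] assms line_has_deriv
  by auto

lemma grad_zero_const:
  fixes f :: "real^'d \<Rightarrow> real"
  assumes "\<And>y. f differentiable (at y)" "\<And>i y. pd i f y = 0"
  shows "f x = f z"
proof -
  have "\<And>y. (f has_derivative (\<lambda>h. 0)) (at y)"
  proof -
    fix y
    obtain D where D: "(f has_derivative D) (at y)" using assms(1)[of y] unfolding differentiable_def by blast
    have lin: "linear D" using D has_derivative_linear by blast
    have Dax: "D (axis i 1) = 0" for i
    proof -
      have "((\<lambda>t. y + t *\<^sub>R axis i (1::real)) has_derivative (\<lambda>t. t *\<^sub>R axis i 1)) (at 0)"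
        by (auto intro!: derivative_eq_intros)
      moreover have "(f has_derivative D) (at (y + 0 *\<^sub>R axis i 1))" using D by simp
      ultimately have "((\<lambda>t. f (y + t *\<^sub>R axis i 1)) has_derivative (\<lambda>t. D (t *\<^sub>R axis i 1))) (at 0)"
        using has_derivative_compose[of "\<lambda>t. y + t *\<^sub>R axis i (1::real)"] by blast
      then have "((\<lambda>t. f (y + t *\<^sub>R axis i 1)) has_real_derivative D (axis i 1)) (at 0)"
        using lin by (simp add: has_field_derivative_def linear_scale mult.commute[of _ "D (axis i 1)"])
      then have "pd i f y = D (axis i 1)" by (rule pd_eqI)
      then show ?thesis using assms(2) by simp
    qed
    have "D h = 0" for h
    proof -
      have "D h = D (\<Sum>i\<in>UNIV. (h$i) *\<^sub>R axis i 1)"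
        using basis_expansion[of h] by (simp add: scalar_mult_eq_scaleR)
      also have "\<dots> = (\<Sum>i\<in>UNIV. (h$i) * D (axis i 1))" using lin by (simp add: linear_sum linear_scale)
      finally show ?thesis using Dax by simp
    qed
    then show "(f has_derivative (\<lambda>h. 0)) (at y)" using D by (metis ext)
  qed
  then obtain c where "\<forall>y\<in>UNIV. f y = c"
    using has_derivative_zero_constant[of UNIV f] by auto
  then show ?thesis by simp
qed

lemma lim_by_bound:
  fixes a b :: "real \<Rightarrow> real"
  assumes "\<forall>\<^sub>F e in F. \<bar>a e - L\<bar> \<le> b e" "(b \<longlongrightarrow> 0) F"
  shows "(a \<longlongrightarrow> L) F"
proof (rule tendsto_sandwich[of "\<lambda>e. L - b e" _ _ "\<lambda>e. L + b e"])
  show "\<forall>\<^sub>F n in F. L - b n \<le> a n" using assms(1) by eventually_elim auto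
  show "\<forall>\<^sub>F n in F. a n \<le> L + b n" using assms(1) by eventually_elim auto
  show "((\<lambda>e. L - b e) \<longlongrightarrow> L) F" using tendsto_diff[OF tendsto_const assms(2)] by simp
  show "((\<lambda>e. L + b e) \<longlongrightarrow> L) F" using tendsto_add[OF tendsto_const assms(2)] by simp
qed

lemma approx_lim0:
  fixes a :: "real \<Rightarrow> real"
  assumes "\<forall>\<^sub>F e in at_right 0. \<bar>a e - (P + e*Q + e\<^sup>2*R)\<bar> \<le> C*e^3"
  shows "(a \<longlongrightarrow> P) (at_right 0)"
proof (rule lim_by_bound[where b="\<lambda>e. e*\<bar>Q\<bar> + e\<^sup>2*\<bar>R\<bar> + C*e^3"])
  show "\<forall>\<^sub>F e in at_right 0. \<bar>a e - P\<bar> \<le> e*\<bar>Q\<bar> + e\<^sup>2*\<bar>R\<bar> + C*e^3"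
    using assms eventually_at_right_less[of 0]
  proof eventually_elim
    case (elim e)
    have "\<bar>e*Q\<bar> = e*\<bar>Q\<bar>" "\<bar>e\<^sup>2*R\<bar> = e\<^sup>2*\<bar>R\<bar>" using elim(2) by (auto simp: abs_mult)
    then show ?case using elim(1) by linarith
  qed
  show "((\<lambda>e. e*\<bar>Q\<bar> + e\<^sup>2*\<bar>R\<bar> + C*e^3) \<longlongrightarrow> 0) (at_right 0)"
    by (rule tendsto_eq_intros | simp)+
qed

lemma approx_lim1:
  fixes a :: "real \<Rightarrow> real"
  assumes "\<forall>\<^sub>F e in at_right 0. \<bar>a e - (P + e*Q + e\<^sup>2*R)\<bar> \<le> C*e^3" "P = 0"
  shows "((\<lambda>e. a e / e) \<longlongrightarrow> Q) (at_right 0)"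
proof (rule lim_by_bound[where b="\<lambda>e. e*\<bar>R\<bar> + C*e^2"])
  show "\<forall>\<^sub>F e in at_right 0. \<bar>a e / e - Q\<bar> \<le> e*\<bar>R\<bar> + C*e^2"
  using assms(1) eventually_at_right_less[of 0]
  proof eventually_elim
    case (elim e)
    have "a e / e - Q = (a e - (P + e*Q + e\<^sup>2*R)) / e + e * R"
      using elim(2) assms(2) by (simp add: field_simps power2_eq_square)
    then have "\<bar>a e / e - Q\<bar> \<le> \<bar>a e - (P + e*Q + e\<^sup>2*R)\<bar> / e + e*\<bar>R\<bar>" using elim(2)
      by (metis abs_divide abs_mult abs_of_pos abs_triangle_ineq)
    also have "\<dots> \<le> C*e^3/e + e*\<bar>R\<bar>" using elim by (simp add: divide_right_mono)
    also have "C*e^3/e = C*e^2" using elim(2) by (simp add: power3_eq_cube power2_eq_square)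
    finally show ?case by simp
  qed
  show "((\<lambda>e. e*\<bar>R\<bar> + C*e^2) \<longlongrightarrow> 0) (at_right 0)"
    by (rule tendsto_eq_intros | simp)+
qed

lemma approx_lim2:
  fixes a :: "real \<Rightarrow> real"
  assumes "\<forall>\<^sub>F e in at_right 0. \<bar>a e - (P + e*Q + e\<^sup>2*R)\<bar> \<le> C*e^3" "P = 0" "Q = 0"
  shows "((\<lambda>e. a e / e\<^sup>2) \<longlongrightarrow> R) (at_right 0)"
proof (rule lim_by_bound[where b="\<lambda>e. C*e"])
  show "\<forall>\<^sub>F e in at_right 0. \<bar>a e / e\<^sup>2 - R\<bar> \<le> C*e"
  using assms(1) eventually_at_right_less[of 0]
  proof eventually_elim
    case (elim e)
    have "a e / e\<^sup>2 - R = (a e - (P + e*Q + e\<^sup>2*R)) / e\<^sup>2"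
      using elim(2) assms(2,3) by (simp add: field_simps power2_eq_square)
    then have "\<bar>a e / e\<^sup>2 - R\<bar> = \<bar>a e - (P + e*Q + e\<^sup>2*R)\<bar> / e\<^sup>2" using elim(2) by simp
    also have "\<dots> \<le> C*e^3/e\<^sup>2" using elim by (simp add: divide_right_mono)
    also have "C*e^3/e\<^sup>2 = C*e" using elim(2) by (simp add: power3_eq_cube power2_eq_square)
    finally show ?case by simp
  qed
  show "((\<lambda>e. C*e) \<longlongrightarrow> 0) (at_right 0)"
    by (rule tendsto_eq_intros | simp)+
qed

definition conv :: "(real \<Rightarrow> real^'d \<Rightarrow> real) \<Rightarrow> (real^'d \<Rightarrow> real) \<Rightarrow> real^'d \<Rightarrow> bool" where
  "conv f f0 x \<longleftrightarrow> (\<forall>\<^sub>F e in at_right 0. f e differentiable (at x)) \<and> f0 differentiable (at x) \<and>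
     ((\<lambda>e. f e x) \<longlongrightarrow> f0 x) (at_right 0) \<and> (\<forall>i. ((\<lambda>e. pd i (f e) x) \<longlongrightarrow> pd i f0 x) (at_right 0))"

lemma conv_val: "conv f f0 x \<Longrightarrow> ((\<lambda>e. f e x) \<longlongrightarrow> f0 x) (at_right 0)"
  and conv_pd: "conv f f0 x \<Longrightarrow> ((\<lambda>e. pd i (f e) x) \<longlongrightarrow> pd i f0 x) (at_right 0)"
  unfolding conv_def by auto

lemma conv_const: "(c \<longlongrightarrow> c0) (at_right 0) \<Longrightarrow> conv (\<lambda>e y. c e) (\<lambda>y. c0) x"
  unfolding conv_def by auto

lemma conv_fix: "f differentiable (at x) \<Longrightarrow> conv (\<lambda>e. f) f x"
  unfolding conv_def by auto

lemma conv_mult: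
  assumes "conv f f0 x" "conv g g0 x"
  shows "conv (\<lambda>e y. f e y * g e y) (\<lambda>y. f0 y * g0 y) x"
  unfolding conv_def
proof (intro conjI allI)
  have ev: "\<forall>\<^sub>F e in at_right 0. f e differentiable (at x) \<and> g e differentiable (at x)"
    using assms unfolding conv_def by (auto intro: eventually_conj)
  then show "\<forall>\<^sub>F e in at_right 0. (\<lambda>y. f e y * g e y) differentiable (at x)"
    by eventually_elim auto
  show "(\<lambda>y. f0 y * g0 y) differentiable (at x)" using assms unfolding conv_def by auto
  show "((\<lambda>e. f e x * g e x) \<longlongrightarrow> f0 x * g0 x) (at_right 0)"
    using assms unfolding conv_def by (auto intro: tendsto_mult)
  fix i
  have "((\<lambda>e. pd i (f e) x * g e x + f e x * pd i (g e) x) \<longlongrightarrow> pd i f0 x * g0 x + f0 x * pd i g0 x) (at_right 0)"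
    using assms unfolding conv_def by (auto intro!: tendsto_intros)
  moreover have "\<forall>\<^sub>F e in at_right 0. pd i (f e) x * g e x + f e x * pd i (g e) x = pd i (\<lambda>y. f e y * g e y) x"
    using ev by eventually_elim (simp add: pd_mult)
  moreover have "pd i (\<lambda>y. f0 y * g0 y) x = pd i f0 x * g0 x + f0 x * pd i g0 x"
    using assms unfolding conv_def by (simp add: pd_mult)
  ultimately show "((\<lambda>e. pd i (\<lambda>y. f e y * g e y) x) \<longlongrightarrow> pd i (\<lambda>y. f0 y * g0 y) x) (at_right 0)"
    using tendsto_cong by fastforce
qed

lemma conv_add:
  assumes "conv f f0 x" "conv g g0 x"
  shows "conv (\<lambda>e y. f e y + g e y) (\<lambda>y. f0 y + g0 y) x"
  unfolding conv_def
proof (intro conjI allI)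
  have ev: "\<forall>\<^sub>F e in at_right 0. f e differentiable (at x) \<and> g e differentiable (at x)"
    using assms unfolding conv_def by (auto intro: eventually_conj)
  then show "\<forall>\<^sub>F e in at_right 0. (\<lambda>y. f e y + g e y) differentiable (at x)"
    by eventually_elim auto
  show "(\<lambda>y. f0 y + g0 y) differentiable (at x)" using assms unfolding conv_def by auto
  show "((\<lambda>e. f e x + g e x) \<longlongrightarrow> f0 x + g0 x) (at_right 0)"
    using assms unfolding conv_def by (auto intro: tendsto_add)
  fix i
  have "((\<lambda>e. pd i (f e) x + pd i (g e) x) \<longlongrightarrow> pd i f0 x + pd i g0 x) (at_right 0)"
    using assms unfolding conv_def by (auto intro!: tendsto_intros)
  moreover have "\<forall>\<^sub>F e in at_right 0. pd i (f e) x + pd i (g e) x = pd i (\<lambda>y. f e y + g e y) x"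
    using ev by eventually_elim (simp add: pd_add)
  moreover have "pd i (\<lambda>y. f0 y + g0 y) x = pd i f0 x + pd i g0 x"
    using assms unfolding conv_def by (simp add: pd_add)
  ultimately show "((\<lambda>e. pd i (\<lambda>y. f e y + g e y) x) \<longlongrightarrow> pd i (\<lambda>y. f0 y + g0 y) x) (at_right 0)"
    using tendsto_cong by fastforce
qed

lemma conv_diff:
  assumes "conv f f0 x" "conv g g0 x"
  shows "conv (\<lambda>e y. f e y - g e y) (\<lambda>y. f0 y - g0 y) x"
  unfolding conv_def
proof (intro conjI allI)
  have ev: "\<forall>\<^sub>F e in at_right 0. f e differentiable (at x) \<and> g e differentiable (at x)"
    using assms unfolding conv_def by (auto intro: eventually_conj)
  then show "\<forall>\<^sub>F e in at_right 0. (\<lambda>y. f e y - g e y) differentiable (at x)"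
    by eventually_elim auto
  show "(\<lambda>y. f0 y - g0 y) differentiable (at x)" using assms unfolding conv_def by auto
  show "((\<lambda>e. f e x - g e x) \<longlongrightarrow> f0 x - g0 x) (at_right 0)"
    using assms unfolding conv_def by (auto intro: tendsto_diff)
  fix i
  have "((\<lambda>e. pd i (f e) x - pd i (g e) x) \<longlongrightarrow> pd i f0 x - pd i g0 x) (at_right 0)"
    using assms unfolding conv_def by (auto intro!: tendsto_intros)
  moreover have "\<forall>\<^sub>F e in at_right 0. pd i (f e) x - pd i (g e) x = pd i (\<lambda>y. f e y - g e y) x"
    using ev by eventually_elim (simp add: pd_diff)
  moreover have "pd i (\<lambda>y. f0 y - g0 y) x = pd i f0 x - pd i g0 x"
    using assms unfolding conv_def by (simp add: pd_diff)
  ultimately show "((\<lambda>e. pd i (\<lambda>y. f e y - g e y) x) \<longlongrightarrow> pd i (\<lambda>y. f0 y - g0 y) x) (at_right 0)"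
    using tendsto_cong by fastforce
qed

lemma conv_inverse:
  assumes "conv f f0 x" "f0 x \<noteq> 0"
  shows "conv (\<lambda>e y. inverse (f e y)) (\<lambda>y. inverse (f0 y)) x"
  unfolding conv_def
proof (intro conjI allI)
  have nz: "\<forall>\<^sub>F e in at_right 0. f e x \<noteq> 0"
    using assms conv_val tendsto_imp_eventually_ne by blast
  have ev: "\<forall>\<^sub>F e in at_right 0. f e differentiable (at x) \<and> f e x \<noteq> 0"
    using assms nz unfolding conv_def by (auto intro: eventually_conj)
  then show "\<forall>\<^sub>F e in at_right 0. (\<lambda>y. inverse (f e y)) differentiable (at x)"
    by eventually_elim auto
  show "(\<lambda>y. inverse (f0 y)) differentiable (at x)" using assms unfolding conv_def by auto
  show "((\<lambda>e. inverse (f e x)) \<longlongrightarrow> inverse (f0 x)) (at_right 0)"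
    using assms unfolding conv_def by (auto intro: tendsto_inverse)
  fix i
  have "((\<lambda>e. - (pd i (f e) x * inverse (f e x ^ 2))) \<longlongrightarrow> - (pd i f0 x * inverse (f0 x ^ 2))) (at_right 0)"
    using assms unfolding conv_def by (auto intro!: tendsto_intros)
  moreover have "\<forall>\<^sub>F e in at_right 0. - (pd i (f e) x * inverse (f e x ^ 2)) = pd i (\<lambda>y. inverse (f e y)) x"
    using ev by eventually_elim (simp add: pd_inverse)
  moreover have "pd i (\<lambda>y. inverse (f0 y)) x = - (pd i f0 x * inverse (f0 x ^ 2))"
    using assms unfolding conv_def by (simp add: pd_inverse)
  ultimately show "((\<lambda>e. pd i (\<lambda>y. inverse (f e y)) x) \<longlongrightarrow> pd i (\<lambda>y. inverse (f0 y)) x) (at_right 0)"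
    using tendsto_cong by fastforce
qed

lemma conv_sum:
  assumes "finite S" "\<And>a. a \<in> S \<Longrightarrow> conv (f a) (f0 a) x"
  shows "conv (\<lambda>e y. \<Sum>a\<in>S. f a e y) (\<lambda>y. \<Sum>a\<in>S. f0 a y) x"
  using assms
proof (induction S rule: finite_induct)
  case empty
  then show ?case using conv_const[of "\<lambda>e. 0" 0 x] by simp
next
  case (insert a S)
  have "conv (f a) (f0 a) x" using insert.prems by simp
  moreover have "conv (\<lambda>e y. \<Sum>a\<in>S. f a e y) (\<lambda>y. \<Sum>a\<in>S. f0 a y) x"
    using insert.IH insert.prems by simp
  ultimately have "conv (\<lambda>e y. f a e y + (\<Sum>a\<in>S. f a e y)) (\<lambda>y. f0 a y + (\<Sum>a\<in>S. f0 a y)) x"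
    by (rule conv_add)
  then show ?case using insert by simp
qed

lemma pd_divconst:
  fixes g :: "real^'d \<Rightarrow> real"
  assumes "g differentiable (at x)"
  shows "pd i (\<lambda>y. g y / c) x = pd i g x / c"
  apply (rule pd_eqI)
  using DERIV_cdivide[OF line_has_deriv[OF assms, of i], of c] by simp

lemma asym_ev:
  assumes "asym_exp f f0 f1 f2"
  obtains C where "\<forall>\<^sub>F e in at_right 0. twice_pdiff (f e) \<and>
        (\<forall>x. \<bar>f e x - (f0 x + e * f1 x + e\<^sup>2 * f2 x)\<bar> \<le> C * e ^ 3 \<and>
             (\<forall>i. \<bar>pd i (f e) x - (pd i f0 x + e * pd i f1 x + e\<^sup>2 * pd i f2 x)\<bar> \<le> C * e ^ 3) \<and>
             (\<forall>i j. \<bar>pd j (pd i (f e)) x - (pd j (pd i f0) x + e * pd j (pd i f1) x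
                                     + e\<^sup>2 * pd j (pd i f2) x)\<bar> \<le> C * e ^ 3))"
proof -
  from assms obtain \<delta> C where d: "\<delta> > 0" and H: "\<forall>e. 0 < e \<and> e < \<delta> \<longrightarrow> twice_pdiff (f e) \<and>
        (\<forall>x. \<bar>f e x - (f0 x + e * f1 x + e\<^sup>2 * f2 x)\<bar> \<le> C * e ^ 3 \<and>
             (\<forall>i. \<bar>pd i (f e) x - (pd i f0 x + e * pd i f1 x + e\<^sup>2 * pd i f2 x)\<bar> \<le> C * e ^ 3) \<and>
             (\<forall>i j. \<bar>pd j (pd i (f e)) x - (pd j (pd i f0) x + e * pd j (pd i f1) x
                                     + e\<^sup>2 * pd j (pd i f2) x)\<bar> \<le> C * e ^ 3))"
    unfolding asym_exp_def by blast
  have "\<forall>\<^sub>F e in at_right 0. 0 < e \<and> e < \<delta>"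
    unfolding eventually_at_right_field using d by blast
  then show ?thesis using H by (intro that[of C]) (auto elim: eventually_mono)
qed

lemma asym_C2: assumes "asym_exp f f0 f1 f2" shows "bdd_C2 f0" "bdd_C2 f1" "bdd_C2 f2"
  using assms unfolding asym_exp_def by auto

lemma C2_diff: "bdd_C2 f \<Longrightarrow> f differentiable (at x)" and C2_diff_pd: "bdd_C2 f \<Longrightarrow> pd i f differentiable (at x)"
  unfolding bdd_C2_def twice_pdiff_def by auto

lemma asym_conv:
  assumes "asym_exp f f0 f1 f2"
  shows "conv f f0 x"
proof -
  obtain C where H: "\<forall>\<^sub>F e in at_right 0. twice_pdiff (f e) \<and>
        (\<forall>x. \<bar>f e x - (f0 x + e * f1 x + e\<^sup>2 * f2 x)\<bar> \<le> C * e ^ 3 \<and>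
             (\<forall>i. \<bar>pd i (f e) x - (pd i f0 x + e * pd i f1 x + e\<^sup>2 * pd i f2 x)\<bar> \<le> C * e ^ 3) \<and>
             (\<forall>i j. \<bar>pd j (pd i (f e)) x - (pd j (pd i f0) x + e * pd j (pd i f1) x
                                     + e\<^sup>2 * pd j (pd i f2) x)\<bar> \<le> C * e ^ 3))"
    using asym_ev[OF assms] by blast
  show ?thesis unfolding conv_def
  proof (intro conjI allI)
    show "\<forall>\<^sub>F e in at_right 0. f e differentiable (at x)"
      using H by eventually_elim (simp add: twice_pdiff_def)
    show "f0 differentiable (at x)" using asym_C2(1)[OF assms] by (rule C2_diff)
    show "((\<lambda>e. f e x) \<longlongrightarrow> f0 x) (at_right 0)"
      by (rule approx_lim0[where Q="f1 x" and R="f2 x" and C=C]) (use H in \<open>eventually_elim, blast\<close>)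
    fix i
    show "((\<lambda>e. pd i (f e) x) \<longlongrightarrow> pd i f0 x) (at_right 0)"
      by (rule approx_lim0[where Q="pd i f1 x" and R="pd i f2 x" and C=C]) (use H in \<open>eventually_elim, blast\<close>)
  qed
qed

lemma asym_conv_pd:
  assumes "asym_exp f f0 f1 f2"
  shows "conv (\<lambda>e. pd i (f e)) (pd i f0) x"
proof -
  obtain C where H: "\<forall>\<^sub>F e in at_right 0. twice_pdiff (f e) \<and>
        (\<forall>x. \<bar>f e x - (f0 x + e * f1 x + e\<^sup>2 * f2 x)\<bar> \<le> C * e ^ 3 \<and>
             (\<forall>i. \<bar>pd i (f e) x - (pd i f0 x + e * pd i f1 x + e\<^sup>2 * pd i f2 x)\<bar> \<le> C * e ^ 3) \<and>
             (\<forall>i j. \<bar>pd j (pd i (f e)) x - (pd j (pd i f0) x + e * pd j (pd i f1) x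
                                     + e\<^sup>2 * pd j (pd i f2) x)\<bar> \<le> C * e ^ 3))"
    using asym_ev[OF assms] by blast
  show ?thesis unfolding conv_def
  proof (intro conjI allI)
    show "\<forall>\<^sub>F e in at_right 0. pd i (f e) differentiable (at x)"
      using H by eventually_elim (simp add: twice_pdiff_def)
    show "pd i f0 differentiable (at x)" using asym_C2(1)[OF assms] by (rule C2_diff_pd)
    show "((\<lambda>e. pd i (f e) x) \<longlongrightarrow> pd i f0 x) (at_right 0)"
      by (rule approx_lim0[where Q="pd i f1 x" and R="pd i f2 x" and C=C]) (use H in \<open>eventually_elim, blast\<close>)
    fix j
    show "((\<lambda>e. pd j (pd i (f e)) x) \<longlongrightarrow> pd j (pd i f0) x) (at_right 0)"
      by (rule approx_lim0[where Q="pd j (pd i f1) x" and R="pd j (pd i f2) x" and C=C]) (use H in \<open>eventually_elim, blast\<close>)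
  qed
qed

lemma asym_scaled:
  assumes "asym_exp f f0 f1 f2" "\<And>y. pd i f0 y = 0" "\<And>y. pd i f1 y = 0"
  shows "conv (\<lambda>e y. pd i (f e) y / e\<^sup>2) (pd i f2) x"
proof -
  obtain C where H: "\<forall>\<^sub>F e in at_right 0. twice_pdiff (f e) \<and>
        (\<forall>x. \<bar>f e x - (f0 x + e * f1 x + e\<^sup>2 * f2 x)\<bar> \<le> C * e ^ 3 \<and>
             (\<forall>i. \<bar>pd i (f e) x - (pd i f0 x + e * pd i f1 x + e\<^sup>2 * pd i f2 x)\<bar> \<le> C * e ^ 3) \<and>
             (\<forall>i j. \<bar>pd j (pd i (f e)) x - (pd j (pd i f0) x + e * pd j (pd i f1) x
                                     + e\<^sup>2 * pd j (pd i f2) x)\<bar> \<le> C * e ^ 3))"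
    using asym_ev[OF assms(1)] by blast
  have z0: "pd i f0 = (\<lambda>y. 0)" "pd i f1 = (\<lambda>y. 0)" using assms(2,3) by auto
  show ?thesis unfolding conv_def
  proof (intro conjI allI)
    show "\<forall>\<^sub>F e in at_right 0. (\<lambda>y. pd i (f e) y / e\<^sup>2) differentiable (at x)"
      using H eventually_at_right_less[of 0] by eventually_elim (simp add: twice_pdiff_def)
    show "pd i f2 differentiable (at x)" using asym_C2(3)[OF assms(1)] by (rule C2_diff_pd)
    show "((\<lambda>e. pd i (f e) x / e\<^sup>2) \<longlongrightarrow> pd i f2 x) (at_right 0)"
      by (rule approx_lim2[where P="pd i f0 x" and Q="pd i f1 x" and C=C])
         (use H in \<open>eventually_elim, blast\<close>, simp_all add: assms)
    fix j
    have "((\<lambda>e. pd j (pd i (f e)) x / e\<^sup>2) \<longlongrightarrow> pd j (pd i f2) x) (at_right 0)"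
      by (rule approx_lim2[where P="pd j (pd i f0) x" and Q="pd j (pd i f1) x" and C=C])
         (use H in \<open>eventually_elim, blast\<close>, simp_all add: z0)
    moreover have "\<forall>\<^sub>F e in at_right 0. pd j (pd i (f e)) x / e\<^sup>2 = pd j (\<lambda>y. pd i (f e) y / e\<^sup>2) x"
      using H by eventually_elim (simp add: twice_pdiff_def pd_divconst)
    ultimately show "((\<lambda>e. pd j (\<lambda>y. pd i (f e) y / e\<^sup>2) x) \<longlongrightarrow> pd j (pd i f2) x) (at_right 0)"
      using tendsto_cong by fastforce
  qed
qed

lemma asym_pinf:
  assumes "asym_exp f f0 f1 f2" "\<And>y. f0 y = c"
  shows "((\<lambda>e. pinf (f e)) \<longlongrightarrow> c) (at_right 0)"
proof -
  obtain C where H: "\<forall>\<^sub>F e in at_right 0. twice_pdiff (f e) \<and>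
        (\<forall>x. \<bar>f e x - (f0 x + e * f1 x + e\<^sup>2 * f2 x)\<bar> \<le> C * e ^ 3 \<and>
             (\<forall>i. \<bar>pd i (f e) x - (pd i f0 x + e * pd i f1 x + e\<^sup>2 * pd i f2 x)\<bar> \<le> C * e ^ 3) \<and>
             (\<forall>i j. \<bar>pd j (pd i (f e)) x - (pd j (pd i f0) x + e * pd j (pd i f1) x
                                     + e\<^sup>2 * pd j (pd i f2) x)\<bar> \<le> C * e ^ 3))"
    using asym_ev[OF assms(1)] by blast
  obtain B1 where B1: "\<And>x. \<bar>f1 x\<bar> \<le> B1"
    using asym_C2(2)[OF assms(1)] unfolding bdd_C2_def bounded_iff by auto
  obtain B2 where B2: "\<And>x. \<bar>f2 x\<bar> \<le> B2"
    using asym_C2(3)[OF assms(1)] unfolding bdd_C2_def bounded_iff by auto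
  show ?thesis
  proof (rule lim_by_bound[where b="\<lambda>e. e*B1 + e\<^sup>2*B2 + C*e^3"])
    show "\<forall>\<^sub>F e in at_right 0. \<bar>pinf (f e) - c\<bar> \<le> e*B1 + e\<^sup>2*B2 + C*e^3"
      using H eventually_at_right_less[of 0]
    proof eventually_elim
      case (elim e)
      let ?b = "e*B1 + e\<^sup>2*B2 + C*e^3"
      have bnd: "\<bar>f e x - c\<bar> \<le> ?b" for x
      proof -
        have "\<bar>e * f1 x\<bar> \<le> e*B1" using elim(2) B1[of x] by (simp add: abs_mult mult_left_mono)
        moreover have "\<bar>e\<^sup>2 * f2 x\<bar> \<le> e\<^sup>2*B2" using B2[of x] by (simp add: abs_mult mult_left_mono)
        ultimately show ?thesis using elim(1) assms(2)[of x] by (smt (verit))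
      qed
      have lb: "c - ?b \<le> f e x" for x using bnd[of x] by (simp add: abs_le_iff)
      have lo: "c - ?b \<le> pinf (f e)" unfolding pinf_def
        by (rule cInf_greatest) (use lb in auto)
      have "bdd_below (range (f e))" using lb by (intro bdd_belowI[of _ "c - ?b"]) auto
      then have "pinf (f e) \<le> f e undefined" unfolding pinf_def by (intro cInf_lower) auto
      then have hi: "pinf (f e) \<le> c + ?b" using bnd[of undefined] by linarith
      show ?case using lo hi by linarith
    qed
    show "((\<lambda>e. e*B1 + e\<^sup>2*B2 + C*e^3) \<longlongrightarrow> 0) (at_right 0)"
      by (rule tendsto_eq_intros | simp)+
  qed
qed

lemma norm_sq_vec: "(norm (v::real^'d))\<^sup>2 = (\<Sum>k\<in>UNIV. (v $ k)\<^sup>2)"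
  unfolding power2_norm_eq_inner inner_vec_def by (simp add: power2_eq_square)

lemma conv_cmult: "conv f f0 x \<Longrightarrow> conv (\<lambda>e y. c * f e y) (\<lambda>y. c * f0 y) x"
  by (rule conv_mult[OF conv_const[OF tendsto_const]])

lemma pd_cmult: "g differentiable (at x) \<Longrightarrow> pd i (\<lambda>y. c * g y) x = c * pd i g x"
  by (simp add: pd_mult)

lemma lim_unique:
  fixes f :: "real \<Rightarrow> real"
  assumes "(f \<longlongrightarrow> a) (at_right (0::real))" "(f \<longlongrightarrow> b) (at_right 0)" shows "a = b"
  using tendsto_unique[OF trivial_limit_at_right_real assms] .

lemma lim_cong: "(g \<longlongrightarrow> a) F \<Longrightarrow> \<forall>\<^sub>F e in F. f e = g e \<Longrightarrow> (f \<longlongrightarrow> a) F"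
  using tendsto_cong[of f g F a] by simp

lemma aux1: "e \<noteq> 0 \<Longrightarrow> a \<noteq> 0 \<Longrightarrow> d \<noteq> 0 \<Longrightarrow> (a/e\<^sup>2*d * q) * (e\<^sup>2/(a*d)) = (q::real)"
  by (simp add: field_simps)
lemma aux2: "e \<noteq> 0 \<Longrightarrow> a \<noteq> 0 \<Longrightarrow> d \<noteq> 0 \<Longrightarrow> (a/e\<^sup>2*d * q) * (e/(a*d)) = (q::real) / e"
  by (simp add: field_simps power2_eq_square)
lemma aux3: "e \<noteq> 0 \<Longrightarrow> (a/e\<^sup>2*d * q) = a*d * (q / e\<^sup>2::real)"
  by (simp add: field_simps)

lemma aux4: "e \<noteq> 0 \<Longrightarrow> - (a / (2 * e\<^sup>2)) * d / r * (e\<^sup>2 * e\<^sup>2 * S) = - (a / 2) * d / r * (e\<^sup>2 * (S::real))"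
  by (simp add: field_simps power2_eq_square)

theorem theorem3p5:
  fixes \<gamma> dt P0 :: real
    and r p r' p' :: "real \<Rightarrow> real^'d \<Rightarrow> real"
    and u u' :: "real \<Rightarrow> real^'d \<Rightarrow> real^'d"
    and r0 r1 r2 p0 p1 p2 r0' r1' r2' p0' p1' p2' :: "real^'d \<Rightarrow> real"
    and u0 u1 u2 u0' u1' u2' :: "real^'d \<Rightarrow> real^'d"
  assumes gamma: "\<gamma> > 1"
    and dt: "dt > 0"
    and scheme: "\<And>e. 0 < e \<Longrightarrow> e \<le> 1 \<Longrightarrow> scheme_step dt e \<gamma> (r e) (u e) (p e) (r' e) (u' e) (p' e)"
    and exp_r: "asym_exp r r0 r1 r2" and exp_u: "vasym_exp u u0 u1 u2" and exp_p: "asym_exp p p0 p1 p2"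
    and exp_r': "asym_exp r' r0' r1' r2'" and exp_u': "vasym_exp u' u0' u1' u2'"
    and exp_p': "asym_exp p' p0' p1' p2'"
    and p0_const: "\<And>x. p0 x = P0" and P0_pos: "P0 > 0"
    and r0'_pos: "\<And>x. r0' x > 0"
  shows "(\<forall>x y. p0' x = p0' y) \<and>
         (\<forall>x. r0' x = r0 x - dt * divg (\<lambda>y. r0 y *\<^sub>R u0 y) x) \<and>
         (\<forall>x. r0' x *\<^sub>R u0' x = r0 x *\<^sub>R u0 x - dt *\<^sub>R div_ruu r0 u0 x - dt *\<^sub>R grad p2' x) \<and>
         (\<forall>x. divg u0 x = - (1 / (\<gamma> * P0)) * ((p0' x - P0) / dt))"
proof -
  define F where "F = at_right (0::real)"
  have evS: "\<forall>\<^sub>F e in at_right 0. 0 < e \<and> e < 1 \<and> scheme_step dt e \<gamma> (r e) (u e) (p e) (r' e) (u' e) (p' e)"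
  proof -
    have "\<forall>\<^sub>F e in at_right (0::real). 0 < e \<and> e < 1"
      unfolding eventually_at_right_field by (intro exI[of _ 1]) auto
    then show ?thesis by eventually_elim (use scheme in auto)
  qed
  have uc: "asym_exp (\<lambda>e x. u e x $ i) (\<lambda>x. u0 x $ i) (\<lambda>x. u1 x $ i) (\<lambda>x. u2 x $ i)" for i
    using exp_u unfolding vasym_exp_def by blast
  have uc': "asym_exp (\<lambda>e x. u' e x $ i) (\<lambda>x. u0' x $ i) (\<lambda>x. u1' x $ i) (\<lambda>x. u2' x $ i)" for i
    using exp_u' unfolding vasym_exp_def by blast
  have p0fun: "p0 = (\<lambda>y. P0)" using p0_const by auto
  have pdp0: "pd i p0 x = 0" for i x by (simp add: p0fun)
  have cr: "conv r r0 x" for x using asym_conv[OF exp_r] .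
  have cr': "conv r' r0' x" for x using asym_conv[OF exp_r'] .
  have cp: "conv p p0 x" for x using asym_conv[OF exp_p] .
  have cp': "conv p' p0' x" for x using asym_conv[OF exp_p'] .
  have cu: "conv (\<lambda>e x. u e x $ i) (\<lambda>x. u0 x $ i) x" for i x using asym_conv[OF uc] .
  have cu': "conv (\<lambda>e x. u' e x $ i) (\<lambda>x. u0' x $ i) x" for i x using asym_conv[OF uc'] .

  define Mlim where "Mlim x j = r0 x * u0 x $ j - dt * (div_ruu r0 u0 x $ j + pd j p0 x)" for x j
  have Mconv: "((\<lambda>e. m_hat dt (r e) (u e) (p e) x $ j) \<longlongrightarrow> Mlim x j) F" for x j
  proof -
    have ci: "conv (\<lambda>e y. r e y * u e y $ i * u e y $ j) (\<lambda>y. r0 y * u0 y $ i * u0 y $ j) x" for i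
      by (rule conv_mult[OF conv_mult[OF cr cu] cu])
    note l1 = conv_val[OF cr[of x]] and l2 = conv_val[OF cu[of j x]] and l3 = conv_pd[OF ci] and l4 = conv_pd[OF cp[of x], of j]
    have "((\<lambda>e. r e x * u e x $ j - dt * ((\<Sum>i\<in>UNIV. pd i (\<lambda>y. r e y * u e y $ i * u e y $ j) x) + pd j (p e) x))
          \<longlongrightarrow> r0 x * u0 x $ j - dt * ((\<Sum>i\<in>UNIV. pd i (\<lambda>y. r0 y * u0 y $ i * u0 y $ j) x) + pd j p0 x)) (at_right 0)"
      by (intro tendsto_diff tendsto_mult tendsto_add tendsto_sum tendsto_const l1 l2 l3 l4)
    then show ?thesis unfolding F_def Mlim_def by (simp add: m_hat_def div_ruu_def grad_def)
  qed

  obtain Cq where Hq: "\<forall>\<^sub>F e in at_right 0. twice_pdiff (p' e) \<and>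
        (\<forall>x. \<bar>p' e x - (p0' x + e * p1' x + e\<^sup>2 * p2' x)\<bar> \<le> Cq * e ^ 3 \<and>
             (\<forall>i. \<bar>pd i (p' e) x - (pd i p0' x + e * pd i p1' x + e\<^sup>2 * pd i p2' x)\<bar> \<le> Cq * e ^ 3) \<and>
             (\<forall>i j. \<bar>pd j (pd i (p' e)) x - (pd j (pd i p0') x + e * pd j (pd i p1') x
                                     + e\<^sup>2 * pd j (pd i p2') x)\<bar> \<le> Cq * e ^ 3))"
    using asym_ev[OF exp_p'] by blast
  have momres: "pd j p0' x = 0 \<and> pd j p1' x = 0 \<and> Mlim x j - r0' x * u0' x $ j = dt * pd j p2' x" for x j
  proof -
    define G where "G e = ((1-e\<^sup>2)/e\<^sup>2*dt) * pd j (p' e) x" for e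
    have evG: "\<forall>\<^sub>F e in F. G e = m_hat dt (r e) (u e) (p e) x $ j - r' e x * u' e x $ j"
      unfolding F_def using evS
    proof eventually_elim
      case (elim e)
      then have "r' e x *\<^sub>R u' e x = m_hat dt (r e) (u e) (p e) x - ((1 - e\<^sup>2) / e\<^sup>2 * dt) *\<^sub>R grad (p' e) x"
        unfolding scheme_step_def by blast
      then have "(r' e x *\<^sub>R u' e x) $ j = (m_hat dt (r e) (u e) (p e) x - ((1 - e\<^sup>2) / e\<^sup>2 * dt) *\<^sub>R grad (p' e) x) $ j"
        by simp
      then show ?case unfolding G_def by (simp add: grad_def)
    qed
    have Gl: "(G \<longlongrightarrow> Mlim x j - r0' x * u0' x $ j) F"
      by (rule lim_cong[OF _ evG]) (unfold F_def, intro tendsto_intros Mconv[unfolded F_def] conv_val cr' cu')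
    have bq: "\<forall>\<^sub>F e in at_right 0. \<bar>pd j (p' e) x - (pd j p0' x + e * pd j p1' x + e\<^sup>2 * pd j p2' x)\<bar> \<le> Cq * e ^ 3"
      using Hq by eventually_elim blast
    have evpos: "\<forall>\<^sub>F e in F. 0 < e \<and> e < 1 \<and> 1 - e\<^sup>2 \<noteq> 0" using evS unfolding F_def
      by (auto elim!: eventually_mono simp: power2_eq_square) (metis less_irrefl mult_strict_mono' zero_le_one less_imp_le mult_1_right)
    have a0: "pd j p0' x = 0"
    proof -
      have "((\<lambda>e. G e * (e\<^sup>2 / ((1-e\<^sup>2)*dt))) \<longlongrightarrow> (Mlim x j - r0' x * u0' x $ j) * (0\<^sup>2 / ((1-0\<^sup>2)*dt))) F"
        using dt by (intro tendsto_intros Gl) (auto simp: F_def)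
      moreover have "\<forall>\<^sub>F e in F. pd j (p' e) x = G e * (e\<^sup>2 / ((1-e\<^sup>2)*dt))"
        using evpos by eventually_elim (use dt in \<open>auto simp: G_def aux1\<close>)
      ultimately have "((\<lambda>e. pd j (p' e) x) \<longlongrightarrow> 0) F" using lim_cong by fastforce
      then show ?thesis using conv_pd[OF cp'] lim_unique unfolding F_def by blast
    qed
    have a1: "pd j p1' x = 0"
    proof -
      have "((\<lambda>e. G e * (e / ((1-e\<^sup>2)*dt))) \<longlongrightarrow> (Mlim x j - r0' x * u0' x $ j) * (0 / ((1-0\<^sup>2)*dt))) F"
        using dt by (intro tendsto_intros Gl) (auto simp: F_def)
      moreover have "\<forall>\<^sub>F e in F. pd j (p' e) x / e = G e * (e / ((1-e\<^sup>2)*dt))"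
        using evpos by eventually_elim (use dt in \<open>auto simp: G_def aux2 power2_eq_square\<close>)
      ultimately have "((\<lambda>e. pd j (p' e) x / e) \<longlongrightarrow> 0) F" using lim_cong by fastforce
      then show ?thesis using approx_lim1[OF bq a0] lim_unique unfolding F_def by blast
    qed
    have a2: "Mlim x j - r0' x * u0' x $ j = dt * pd j p2' x"
    proof -
      have "((\<lambda>e. (1-e\<^sup>2)*dt * (pd j (p' e) x / e\<^sup>2)) \<longlongrightarrow> (1-0\<^sup>2)*dt * pd j p2' x) F"
        unfolding F_def by (intro tendsto_intros approx_lim2[OF bq a0 a1])
      moreover have "\<forall>\<^sub>F e in F. G e = (1-e\<^sup>2)*dt * (pd j (p' e) x / e\<^sup>2)"
        using evpos by eventually_elim (auto simp: G_def aux3)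
      ultimately have "(G \<longlongrightarrow> dt * pd j p2' x) F" using lim_cong by fastforce
      then show ?thesis using Gl lim_unique unfolding F_def by blast
    qed
    show ?thesis using a0 a1 a2 by blast
  qed

  have C1: "\<forall>x y. p0' x = p0' y"
    using grad_zero_const[of p0'] C2_diff[OF asym_C2(1)[OF exp_p']] momres by blast
  have C2: "\<forall>x. r0' x = r0 x - dt * divg (\<lambda>y. r0 y *\<^sub>R u0 y) x"
  proof
    fix x
    have "((\<lambda>e. r e x - dt * (\<Sum>i\<in>UNIV. pd i (\<lambda>y. r e y * u e y $ i) x))
          \<longlongrightarrow> r0 x - dt * (\<Sum>i\<in>UNIV. pd i (\<lambda>y. r0 y * u0 y $ i) x)) F"
      unfolding F_def by (intro tendsto_intros conv_val conv_pd cr cu conv_mult)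
    moreover have "\<forall>\<^sub>F e in F. r' e x = r e x - dt * (\<Sum>i\<in>UNIV. pd i (\<lambda>y. r e y * u e y $ i) x)"
      using evS unfolding F_def
      by eventually_elim (auto simp: scheme_step_def rho_hat_def divg_def)
    ultimately have "((\<lambda>e. r' e x) \<longlongrightarrow> r0 x - dt * (\<Sum>i\<in>UNIV. pd i (\<lambda>y. r0 y * u0 y $ i) x)) F"
      using lim_cong by fastforce
    then show "r0' x = r0 x - dt * divg (\<lambda>y. r0 y *\<^sub>R u0 y) x"
      using conv_val[OF cr'] lim_unique unfolding F_def by (simp add: divg_def) blast
  qed
  have C3: "\<forall>x. r0' x *\<^sub>R u0' x = r0 x *\<^sub>R u0 x - dt *\<^sub>R div_ruu r0 u0 x - dt *\<^sub>R grad p2' x"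
  proof (intro allI iffD2[OF vec_eq_iff] allI)
    fix x j
    show "(r0' x *\<^sub>R u0' x) $ j = (r0 x *\<^sub>R u0 x - dt *\<^sub>R div_ruu r0 u0 x - dt *\<^sub>R grad p2' x) $ j"
      using momres[where x=x and j=j] pdp0[where i=j and x=x] unfolding Mlim_def by (simp add: grad_def algebra_simps)
  qed

  have C4: "divg u0 x = - (1 / (\<gamma> * P0)) * ((p0' x - P0) / dt)" for x
  proof -
    define c where "c = p0' x"
    have p0'c: "p0' y = c" for y using C1 c_def by metis
    have pinfl: "((\<lambda>e. pinf (p' e)) \<longlongrightarrow> c) F" unfolding F_def using asym_pinf[OF exp_p' p0'c] .
    have pinfP: "((\<lambda>e. pinf (p e)) \<longlongrightarrow> P0) F" unfolding F_def using asym_pinf[OF exp_p p0_const] .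
    have r0nz: "r0' x \<noteq> 0" using r0'_pos[of x] by linarith
    have r'nz: "\<forall>\<^sub>F e in F. r' e x \<noteq> 0"
      unfolding F_def by (rule tendsto_imp_eventually_ne[OF conv_val[OF cr'[of x]] r0nz])
    obtain Cr where Hr: "\<forall>\<^sub>F e in at_right 0. twice_pdiff (r' e) \<and>
        (\<forall>x. \<bar>r' e x - (r0' x + e * r1' x + e\<^sup>2 * r2' x)\<bar> \<le> Cr * e ^ 3 \<and>
             (\<forall>i. \<bar>pd i (r' e) x - (pd i r0' x + e * pd i r1' x + e\<^sup>2 * pd i r2' x)\<bar> \<le> Cr * e ^ 3) \<and>
             (\<forall>i j. \<bar>pd j (pd i (r' e)) x - (pd j (pd i r0') x + e * pd j (pd i r1') x
                                     + e\<^sup>2 * pd j (pd i r2') x)\<bar> \<le> Cr * e ^ 3))"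
      using asym_ev[OF exp_r'] by blast
    have tw: "\<forall>\<^sub>F e in F. twice_pdiff (p' e) \<and> twice_pdiff (r' e)"
      using Hr Hq unfolding F_def by eventually_elim simp
    have evR: "\<forall>\<^sub>F e in F. rho_hat dt (r e) (u e) = r' e"
      using evS unfolding F_def by eventually_elim (simp add: scheme_step_def fun_eq_iff)
    have sc: "conv (\<lambda>e y. pd i (p' e) y / e\<^sup>2) (pd i p2') y" for i y
      by (rule asym_scaled[OF exp_p']) (simp_all add: momres)
    define A where "A e y = (p' e y - pinf (p' e)) * inverse (r' e y)" for e y
    have cA: "conv A (\<lambda>y. (p0' y - c) * inverse (r0' y)) x"
      unfolding A_def
      by (rule conv_mult[OF conv_diff[OF cp'[of x] conv_const[OF pinfl[unfolded F_def]]] conv_inverse[OF cr'[of x] r0nz]])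
    define X1 where "X1 e = - ((1 - e\<^sup>2)\<^sup>2 / e\<^sup>2) * dt\<^sup>2 *
            divg (\<lambda>y. ((p' e y - pinf (p' e)) / rho_hat dt (r e) (u e) y) *\<^sub>R grad (p' e) y) x" for e
    have X1l: "(X1 \<longlongrightarrow> 0) F"
    proof -
      have l: "((\<lambda>e. - ((1 - e\<^sup>2)\<^sup>2) * dt\<^sup>2 * (\<Sum>i\<in>UNIV. pd i (\<lambda>y. A e y * (pd i (p' e) y / e\<^sup>2)) x))
          \<longlongrightarrow> - ((1 - 0\<^sup>2)\<^sup>2) * dt\<^sup>2 * (\<Sum>i\<in>UNIV. pd i (\<lambda>y. (p0' y - c) * inverse (r0' y) * pd i p2' y) x)) F"
      proof -
        have l_i: "((\<lambda>e. pd i (\<lambda>y. A e y * (pd i (p' e) y / e\<^sup>2)) x) \<longlongrightarrow> pd i (\<lambda>y. (p0' y - c) * inverse (r0' y) * pd i p2' y) x) F" for i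
          using conv_pd[OF conv_mult[OF cA sc[of i x]], of i] unfolding F_def .
        show ?thesis unfolding F_def by (intro tendsto_intros l_i[unfolded F_def])
      qed
      have z: "(\<lambda>y. (p0' y - c) * inverse (r0' y) * pd i p2' y) = (\<lambda>y. 0)" for i
        by (simp add: p0'c)
      have "\<forall>\<^sub>F e in F. X1 e = - ((1 - e\<^sup>2)\<^sup>2) * dt\<^sup>2 * (\<Sum>i\<in>UNIV. pd i (\<lambda>y. A e y * (pd i (p' e) y / e\<^sup>2)) x)"
        using evR r'nz tw evS unfolding F_def
      proof eventually_elim
        case (elim e)
        have e0: "e \<noteq> 0" using elim by auto
        have "pd i (\<lambda>y. A e y * (pd i (p' e) y / e\<^sup>2)) x
              = pd i (\<lambda>y. (p' e y - pinf (p' e)) / r' e y * pd i (p' e) y) x / e\<^sup>2" for i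
        proof -
          have eqf: "(\<lambda>y. A e y * (pd i (p' e) y / e\<^sup>2)) = (\<lambda>y. ((p' e y - pinf (p' e)) / r' e y * pd i (p' e) y) / e\<^sup>2)"
            by (simp add: A_def divide_inverse mult.assoc)
          have dif: "(\<lambda>y. (p' e y - pinf (p' e)) / r' e y * pd i (p' e) y) differentiable (at x)"
          proof -
            have d1: "p' e differentiable (at x)" "r' e differentiable (at x)" "pd i (p' e) differentiable (at x)"
              using elim(3) by (auto simp: twice_pdiff_def)
            show ?thesis
              by (rule differentiable_mult[OF differentiable_divide[OF differentiable_diff[OF d1(1) differentiable_const] d1(2) elim(2)] d1(3)])
          qed
          show ?thesis unfolding eqf by (rule pd_divconst[OF dif])
        qed
        then show ?case using elim(1) e0
          by (simp add: X1_def divg_def grad_def sum_divide_distrib[symmetric])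
      qed
      then show ?thesis using lim_cong[OF l] by (simp add: z)
    qed

    define X2 where "X2 e = - ((1 - e\<^sup>2)\<^sup>2 / (2 * e\<^sup>2)) * dt\<^sup>2 / rho_hat dt (r e) (u e) x * (norm (grad (p' e) x))\<^sup>2" for e
    have X2l: "(X2 \<longlongrightarrow> 0) F"
    proof -
      have l: "((\<lambda>e. - ((1 - e\<^sup>2)\<^sup>2 / 2) * dt\<^sup>2 / r' e x * (e\<^sup>2 * (\<Sum>i\<in>UNIV. (pd i (p' e) x / e\<^sup>2)\<^sup>2)))
          \<longlongrightarrow> - ((1 - 0\<^sup>2)\<^sup>2 / 2) * dt\<^sup>2 / r0' x * (0\<^sup>2 * (\<Sum>i\<in>UNIV. (pd i p2' x)\<^sup>2))) F"
      proof -
        note v1 = conv_val[OF cr'[of x]] and v2 = conv_val[OF sc[of _ x]]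
        show ?thesis unfolding F_def using r0nz by (intro tendsto_intros v1 v2) auto
      qed
      have "\<forall>\<^sub>F e in F. X2 e = - ((1 - e\<^sup>2)\<^sup>2 / 2) * dt\<^sup>2 / r' e x * (e\<^sup>2 * (\<Sum>i\<in>UNIV. (pd i (p' e) x / e\<^sup>2)\<^sup>2))"
        using evR evS unfolding F_def
      proof eventually_elim
        case (elim e)
        have e0: "e \<noteq> 0" using elim by auto
        have n2: "(norm (grad (p' e) x))\<^sup>2 = e\<^sup>2 * e\<^sup>2 * (\<Sum>i\<in>UNIV. (pd i (p' e) x / e\<^sup>2)\<^sup>2)"
          using e0 by (simp add: norm_sq_vec grad_def sum_distrib_left power_divide)
        show ?case by (simp only: X2_def elim(1) n2 aux4[OF e0])
      qed
      then show ?thesis using lim_cong[OF l] by simp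
    qed
    define U where "U i e y = inverse (r' e y) * (r' e y * u' e y $ i + (1-e\<^sup>2)*dt * (pd i (p' e) y / e\<^sup>2))" for i e y
    have evU: "\<forall>\<^sub>F e in F. \<forall>i. (\<lambda>y. u_hat dt (r e) (u e) (p e) y $ i) = U i e"
      using evS evR unfolding F_def
    proof eventually_elim
      case (elim e)
      have e0: "e \<noteq> 0" using elim by auto
      show ?case
      proof (intro allI ext)
        fix i y
        have "r' e y *\<^sub>R u' e y = m_hat dt (r e) (u e) (p e) y - ((1 - e\<^sup>2) / e\<^sup>2 * dt) *\<^sub>R grad (p' e) y"
          using elim(1) unfolding scheme_step_def by blast
        then have "(r' e y *\<^sub>R u' e y) $ i = (m_hat dt (r e) (u e) (p e) y - ((1 - e\<^sup>2) / e\<^sup>2 * dt) *\<^sub>R grad (p' e) y) $ i"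
          by simp
        then have m: "m_hat dt (r e) (u e) (p e) y $ i = r' e y * u' e y $ i + (1-e\<^sup>2)*dt * (pd i (p' e) y / e\<^sup>2)"
          using aux3[OF e0, of "1-e\<^sup>2" dt "pd i (p' e) y"] by (simp add: grad_def)
        show "u_hat dt (r e) (u e) (p e) y $ i = U i e y"
          unfolding u_hat_def U_def using m elim(2) by (simp add: divide_inverse)
      qed
    qed
    have lk: "((\<lambda>e. (1-e\<^sup>2)*dt) \<longlongrightarrow> (1-0\<^sup>2)*dt) (at_right 0)" by (intro tendsto_intros)
    have cU: "conv (U i) (\<lambda>y. inverse (r0' y) * (r0' y * u0' y $ i + (1-0\<^sup>2)*dt * pd i p2' y)) x" for i
      unfolding U_def
      by (rule conv_mult[OF conv_inverse[OF cr'[of x] r0nz] conv_add[OF conv_mult[OF cr'[of x] cu'[of i x]] conv_mult[OF conv_const[OF lk] sc[of i x]]]])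
    have p'l: "((\<lambda>e. p' e x) \<longlongrightarrow> c) F" using conv_val[OF cp'[of x]] unfolding F_def c_def .
    define X3 where "X3 e = (1 - e\<^sup>2) * dt * (p' e x - pinf (p' e)) * divg (u_hat dt (r e) (u e) (p e)) x" for e
    have X3l: "(X3 \<longlongrightarrow> 0) F"
    proof -
      have l: "((\<lambda>e. (1 - e\<^sup>2) * dt * (p' e x - pinf (p' e)) * (\<Sum>i\<in>UNIV. pd i (U i e) x))
         \<longlongrightarrow> (1 - 0\<^sup>2) * dt * (c - c) * (\<Sum>i\<in>UNIV. pd i (\<lambda>y. inverse (r0' y) * (r0' y * u0' y $ i + (1-0\<^sup>2)*dt * pd i p2' y)) x)) F"
      proof -
        have v: "((\<lambda>e. pd i (U i e) x) \<longlongrightarrow> pd i (\<lambda>y. inverse (r0' y) * (r0' y * u0' y $ i + (1-0\<^sup>2)*dt * pd i p2' y)) x) F" for i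
          using conv_pd[OF cU[of i], of i] unfolding F_def .
        show ?thesis using p'l pinfl unfolding F_def by (intro tendsto_intros v[unfolded F_def])
      qed
      have "\<forall>\<^sub>F e in F. X3 e = (1 - e\<^sup>2) * dt * (p' e x - pinf (p' e)) * (\<Sum>i\<in>UNIV. pd i (U i e) x)"
        using evU by eventually_elim (simp add: X3_def divg_def)
      then show ?thesis using lim_cong[OF l] by simp
    qed
    define X4 where "X4 e = p_hat dt e \<gamma> (r e) (u e) (p e) x / (\<gamma> - 1)" for e
    define RE where "RE e y = p e y * inverse (\<gamma> - 1) + e\<^sup>2 / 2 * r e y * (\<Sum>k\<in>UNIV. u e y $ k * u e y $ k)" for e y
    have REeq: "rhoE e \<gamma> (r e) (u e) (p e) = RE e" for e
      unfolding rhoE_def RE_def norm_sq_vec by (rule ext) (simp only: divide_inverse power2_eq_square)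
    have g1: "\<gamma> - 1 \<noteq> 0" using gamma by simp
    have le2: "((\<lambda>e. e\<^sup>2 / 2) \<longlongrightarrow> 0) (at_right (0::real))"
    proof -
      have "((\<lambda>e. e\<^sup>2 / 2) \<longlongrightarrow> 0\<^sup>2 / 2) (at_right (0::real))" by (intro tendsto_intros) simp
      then show ?thesis by simp
    qed
    have le2': "((\<lambda>e. e\<^sup>2) \<longlongrightarrow> 0) (at_right (0::real))"
    proof -
      have "((\<lambda>e. e\<^sup>2) \<longlongrightarrow> 0\<^sup>2) (at_right (0::real))" by (intro tendsto_intros)
      then show ?thesis by simp
    qed
    have lpi: "((\<lambda>e. (1-e\<^sup>2) * pinf (p e)) \<longlongrightarrow> P0) (at_right (0::real))"
    proof -
      have "((\<lambda>e. (1-e\<^sup>2) * pinf (p e)) \<longlongrightarrow> (1-0\<^sup>2) * P0) (at_right (0::real))"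
        using pinfP unfolding F_def by (intro tendsto_intros)
      then show ?thesis by simp
    qed
    have csq: "conv (\<lambda>e y. \<Sum>k\<in>UNIV. u e y $ k * u e y $ k) (\<lambda>y. \<Sum>k\<in>UNIV. u0 y $ k * u0 y $ k) y" for y
      by (rule conv_sum[of UNIV "\<lambda>k e y. u e y $ k * u e y $ k" "\<lambda>k y. u0 y $ k * u0 y $ k", simplified])
         (rule conv_mult[OF cu cu])
    have cRE: "conv RE (\<lambda>y. p0 y * inverse (\<gamma> - 1) + 0 * r0 y * (\<Sum>k\<in>UNIV. u0 y $ k * u0 y $ k)) x"
      unfolding RE_def
      by (rule conv_add[OF conv_mult[OF cp[of x] conv_const[OF tendsto_const]] conv_mult[OF conv_mult[OF conv_const[OF le2] cr[of x]] csq[of x]]])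
    have cB: "conv (\<lambda>e y. (RE e y + (e\<^sup>2 * p e y + (1-e\<^sup>2) * pinf (p e))) * u e y $ i)
       (\<lambda>y. (p0 y * inverse (\<gamma> - 1) + 0 * r0 y * (\<Sum>k\<in>UNIV. u0 y $ k * u0 y $ k) + (0 * p0 y + P0)) * u0 y $ i) x" for i
      by (rule conv_mult[OF conv_add[OF cRE conv_add[OF conv_mult[OF conv_const[OF le2'] cp[of x]] conv_const[OF lpi]]] cu[of i x]])
    have B0: "pd i (\<lambda>y. (p0 y * inverse (\<gamma> - 1) + 0 * r0 y * (\<Sum>k\<in>UNIV. u0 y $ k * u0 y $ k) + (0 * p0 y + P0)) * u0 y $ i) x
        = (P0 * inverse (\<gamma> - 1) + P0) * pd i (\<lambda>y. u0 y $ i) x" for i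
    proof -
      have "(\<lambda>y. (p0 y * inverse (\<gamma> - 1) + 0 * r0 y * (\<Sum>k\<in>UNIV. u0 y $ k * u0 y $ k) + (0 * p0 y + P0)) * u0 y $ i)
          = (\<lambda>y. (P0 * inverse (\<gamma> - 1) + P0) * u0 y $ i)" by (simp add: p0_const)
      then show ?thesis using pd_cmult[OF C2_diff[OF asym_C2(1)[OF uc[of i]]]] by simp
    qed
    have X4l: "(X4 \<longlongrightarrow> P0 * inverse (\<gamma> - 1) - dt * (\<Sum>i\<in>UNIV. (P0 * inverse (\<gamma> - 1) + P0) * pd i (\<lambda>y. u0 y $ i) x)) F"
    proof -
      have v: "((\<lambda>e. pd i (\<lambda>y. (RE e y + (e\<^sup>2 * p e y + (1-e\<^sup>2) * pinf (p e))) * u e y $ i) x)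
         \<longlongrightarrow> (P0 * inverse (\<gamma> - 1) + P0) * pd i (\<lambda>y. u0 y $ i) x) (at_right 0)" for i
        using conv_pd[OF cB[of i], of i] unfolding B0 .
      have w: "((\<lambda>e. U i e x) \<longlongrightarrow> inverse (r0' x) * (r0' x * u0' x $ i + (1-0\<^sup>2)*dt * pd i p2' x)) (at_right 0)" for i
        using conv_val[OF cU[of i]] unfolding F_def .
      have z: "((\<lambda>e. RE e x) \<longlongrightarrow> p0 x * inverse (\<gamma> - 1) + 0 * r0 x * (\<Sum>k\<in>UNIV. u0 x $ k * u0 x $ k)) (at_right 0)"
        using conv_val[OF cRE] .
      have l: "((\<lambda>e. RE e x - dt * (\<Sum>i\<in>UNIV. pd i (\<lambda>y. (RE e y + (e\<^sup>2 * p e y + (1-e\<^sup>2) * pinf (p e))) * u e y $ i) x)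
                 - e\<^sup>2 / 2 * r' e x * (\<Sum>i\<in>UNIV. (U i e x)\<^sup>2))
        \<longlongrightarrow> (p0 x * inverse (\<gamma> - 1) + 0 * r0 x * (\<Sum>k\<in>UNIV. u0 x $ k * u0 x $ k))
             - dt * (\<Sum>i\<in>UNIV. (P0 * inverse (\<gamma> - 1) + P0) * pd i (\<lambda>y. u0 y $ i) x)
             - 0 * r0' x * (\<Sum>i\<in>UNIV. (inverse (r0' x) * (r0' x * u0' x $ i + (1-0\<^sup>2)*dt * pd i p2' x))\<^sup>2)) (at_right 0)"
        by (intro tendsto_diff tendsto_mult tendsto_sum tendsto_power tendsto_const z v w le2 conv_val[OF cr'[of x]])
      have "\<forall>\<^sub>F e in F. X4 e = RE e x - dt * (\<Sum>i\<in>UNIV. pd i (\<lambda>y. (RE e y + (e\<^sup>2 * p e y + (1-e\<^sup>2) * pinf (p e))) * u e y $ i) x)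
                 - e\<^sup>2 / 2 * r' e x * (\<Sum>i\<in>UNIV. (U i e x)\<^sup>2)"
        using evU evR
      proof eventually_elim
        case (elim e)
        have ui: "u_hat dt (r e) (u e) (p e) x $ i = U i e x" for i
          using fun_cong[OF spec[OF elim(1), of i], of x] by simp
        have nu: "(norm (u_hat dt (r e) (u e) (p e) x))\<^sup>2 = (\<Sum>i\<in>UNIV. (U i e x)\<^sup>2)"
          unfolding norm_sq_vec ui ..
        have ph: "X4 e = E_hat dt e \<gamma> (r e) (u e) (p e) x - e\<^sup>2 / 2 * rho_hat dt (r e) (u e) x * (norm (u_hat dt (r e) (u e) (p e) x))\<^sup>2"
          unfolding X4_def p_hat_def using g1 by simp
        have eh: "E_hat dt e \<gamma> (r e) (u e) (p e) x = RE e x - dt * (\<Sum>i\<in>UNIV. pd i (\<lambda>y. (RE e y + (e\<^sup>2 * p e y + (1-e\<^sup>2) * pinf (p e))) * u e y $ i) x)"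
          unfolding E_hat_def divg_def REeq by simp
        show ?case unfolding ph eh nu elim(2) ..
      qed
      then show ?thesis using lim_cong[OF l[folded F_def]] by (simp add: p0_const)
    qed
    have evEq: "\<forall>\<^sub>F e in F. X1 e + p' e x / (\<gamma> - 1) = X2 e - X3 e + X4 e"
      using evS unfolding F_def
    proof eventually_elim
      case (elim e)
      then have "\<forall>x. - ((1 - e\<^sup>2)\<^sup>2 / e\<^sup>2) * dt\<^sup>2 *
            divg (\<lambda>y. ((p' e y - pinf (p' e)) / rho_hat dt (r e) (u e) y) *\<^sub>R grad (p' e) y) x
          + p' e x / (\<gamma> - 1)
        = - ((1 - e\<^sup>2)\<^sup>2 / (2 * e\<^sup>2)) * dt\<^sup>2 / rho_hat dt (r e) (u e) x * (norm (grad (p' e) x))\<^sup>2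
          - (1 - e\<^sup>2) * dt * (p' e x - pinf (p' e)) * divg (u_hat dt (r e) (u e) (p e)) x
          + p_hat dt e \<gamma> (r e) (u e) (p e) x / (\<gamma> - 1)" unfolding scheme_step_def by (elim conjE)
      then show ?case unfolding X1_def X2_def X3_def X4_def by (rule spec)
    qed
    have lhs: "((\<lambda>e. X1 e + p' e x / (\<gamma> - 1)) \<longlongrightarrow> 0 + c / (\<gamma> - 1)) F"
      using g1 by (intro tendsto_intros X1l p'l)
    have rhs: "((\<lambda>e. X2 e - X3 e + X4 e) \<longlongrightarrow> 0 - 0 + (P0 * inverse (\<gamma> - 1) - dt * (\<Sum>i\<in>UNIV. (P0 * inverse (\<gamma> - 1) + P0) * pd i (\<lambda>y. u0 y $ i) x))) F"
      by (intro tendsto_intros X2l X3l X4l)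
    have "c / (\<gamma> - 1) = P0 * inverse (\<gamma> - 1) - dt * (\<Sum>i\<in>UNIV. (P0 * inverse (\<gamma> - 1) + P0) * pd i (\<lambda>y. u0 y $ i) x)"
      using lim_unique[OF lhs[unfolded F_def] lim_cong[OF rhs evEq, unfolded F_def]] by simp
    then have eqn: "c / (\<gamma> - 1) = P0 / (\<gamma> - 1) - dt * ((P0 / (\<gamma> - 1) + P0) * divg u0 x)"
      by (simp add: divg_def sum_distrib_left divide_inverse)
    have h: "P0 / (\<gamma> - 1) + P0 = \<gamma> * P0 / (\<gamma> - 1)" using g1 by (simp add: field_simps)
    have "c / (\<gamma> - 1) = (P0 - dt * (\<gamma> * P0) * divg u0 x) / (\<gamma> - 1)"
      unfolding eqn h by (simp add: diff_divide_distrib)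
    then have cc: "c = P0 - dt * (\<gamma> * P0) * divg u0 x" using g1 by simp
    have nz: "\<gamma> * P0 \<noteq> 0" "dt \<noteq> 0" using gamma P0_pos dt by auto
    have "(c - P0) / dt = - ((\<gamma> * P0) * divg u0 x)" unfolding cc using nz by (simp add: field_simps)
    then show ?thesis unfolding c_def[symmetric] using nz by simp
  qed
  show ?thesis using C1 C2 C3 C4 by blast
qed

end
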